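(* Let $\mathcal{A}=\{f\in C^\infty(]0,1[,]0,1[)\mid \lim_{x\to1}f(x)=1,\ \lim_{x\to0}f(x)=0\}$ and $\mathcal{D}=\{f\in\mathcal{A}\mid \inf_{x\in]0,1[}f'(x)>0 \text{ and } \sup_{x\in]0,1[}f'(x)>0\}$. Let $P\in\mathbb{R}[x]$ be a polynomial with $P(0)=P(1)=0$, $0<P(x)<\min(x,1-x)$ for all $x\in]0,1[$, and $\sup_{x\in]0,1[}|P'(x)|<1$. Define $\varphi(t,x)=\frac{P(x)t}{(1-P(x))t+P(x)}$ and $c_t(x)=x+\varphi(t,x)$ for $t\ge0$, $c_t(x)=x-\varphi(-t,x)$ for $t<0$. Then $c_t\in\mathcal{D}$ for all $t\in[0,1]$. *)

theory Defs
  imports "HOL-Analysis.Analysis" "HOL-Computational_Algebra.Polynomial"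
begin

definition smooth_on :: "real set \<Rightarrow> (real \<Rightarrow> real) \<Rightarrow> bool" where
  "smooth_on S f \<longleftrightarrow> (\<forall>n. \<forall>x\<in>S. ((deriv ^^ n) f) differentiable (at x))"

definition classA :: "(real \<Rightarrow> real) set" where
  "classA = {f. smooth_on {0<..<1} f \<and> (\<forall>x\<in>{0<..<1}. f x \<in> {0<..<1})
               \<and> (f \<longlongrightarrow> 1) (at_left 1) \<and> (f \<longlongrightarrow> 0) (at_right 0)}"

definition classD :: "(real \<Rightarrow> real) set" where
  "classD = {f \<in> classA. (INF x\<in>{0<..<1}. ereal (deriv f x)) > 0
                       \<and> (SUP x\<in>{0<..<1}. ereal (deriv f x)) > 0}"

definition phi :: "real poly \<Rightarrow> real \<Rightarrow> real \<Rightarrow> real" where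
  "phi P t x = poly P x * t / ((1 - poly P x) * t + poly P x)"

definition cfun :: "real poly \<Rightarrow> real \<Rightarrow> real \<Rightarrow> real" where
  "cfun P t x = (if t \<ge> 0 then x + phi P t x else x - phi P (-t) x)"

end

theory Submission
  imports Defs
begin

lemma quot_deriv:
  fixes B D :: "real poly"
  assumes "poly D x \<noteq> 0"
  shows "((\<lambda>x. poly B x / poly D x ^ k) has_real_derivative
     (poly (pderiv B * D - smult (of_nat k) (B * pderiv D)) x / poly D x ^ Suc k)) (at x)"
proof -
  have "((\<lambda>x. poly B x / poly D x ^ k) has_real_derivative
     (poly (pderiv B) x * poly D x ^ k - (of_nat k * (poly (pderiv D) x * poly D x ^ (k - Suc 0))) * poly B x)
       / (poly D x ^ k) ^ Suc (Suc 0)) (at x)"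
    by (rule DERIV_quotient[OF poly_DERIV DERIV_power[OF poly_DERIV]]) (use assms in simp)
  moreover have "(poly (pderiv B) x * poly D x ^ k - (of_nat k * (poly (pderiv D) x * poly D x ^ (k - Suc 0))) * poly B x)
       / (poly D x ^ k) ^ Suc (Suc 0) = poly (pderiv B * D - smult (of_nat k) (B * pderiv D)) x / poly D x ^ Suc k"
  proof (cases k)
    case 0 then show ?thesis using assms by (simp add: field_simps)
  next
    case (Suc m) then show ?thesis using assms by (simp add: field_simps power2_eq_square)
  qed
  ultimately show ?thesis by simp
qed

lemma iter_rep:
  fixes D :: "real poly" and U :: "real set"
  assumes U: "open U" and nz: "\<forall>x\<in>U. poly D x \<noteq> 0"
  shows "(\<forall>x\<in>U. g x = poly B x / poly D x ^ k) \<Longrightarrow>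
     \<exists>B' k'. \<forall>x\<in>U. (deriv ^^ n) g x = poly B' x / poly D x ^ k'"
proof (induction n)
  case 0 then show ?case by auto
next
  case (Suc n)
  then obtain B' k' where h: "\<forall>x\<in>U. (deriv ^^ n) g x = poly B' x / poly D x ^ k'" by blast
  have "\<forall>x\<in>U. (deriv ^^ Suc n) g x = poly (pderiv B' * D - smult (of_nat k') (B' * pderiv D)) x / poly D x ^ Suc k'"
  proof
    fix x assume x: "x \<in> U"
    have "((deriv ^^ n) g has_real_derivative
     (poly (pderiv B' * D - smult (of_nat k') (B' * pderiv D)) x / poly D x ^ Suc k')) (at x)"
      using has_field_derivative_transform_within_open[OF quot_deriv[of D x B' k'] U x] nz x h by auto
    then show "(deriv ^^ Suc n) g x = poly (pderiv B' * D - smult (of_nat k') (B' * pderiv D)) x / poly D x ^ Suc k'"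
      by (simp add: DERIV_imp_deriv)
  qed
  then show ?case by blast
qed

lemma smooth_rep:
  fixes D :: "real poly" and U :: "real set"
  assumes U: "open U" and nz: "\<forall>x\<in>U. poly D x \<noteq> 0"
    and g: "\<forall>x\<in>U. g x = poly B x / poly D x ^ k"
  shows "smooth_on U g"
  unfolding smooth_on_def
proof (intro allI ballI)
  fix n x assume x: "x \<in> U"
  obtain B' k' where h: "\<forall>x\<in>U. (deriv ^^ n) g x = poly B' x / poly D x ^ k'"
    using iter_rep[OF U nz g] by blast
  have "((deriv ^^ n) g has_real_derivative
     (poly (pderiv B' * D - smult (of_nat k') (B' * pderiv D)) x / poly D x ^ Suc k')) (at x)"
    using has_field_derivative_transform_within_open[OF quot_deriv[of D x B' k'] U x] nz x h by auto
  then show "(deriv ^^ n) g differentiable at x"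
    using real_differentiable_def by blast
qed

lemma sand1:
  fixes P :: "real poly"
  assumes h: "\<And>x. x \<in> {0<..<1} \<Longrightarrow> x \<le> f x \<and> f x \<le> x + poly P x" and p: "poly P 1 = 0"
  shows "(f \<longlongrightarrow> 1) (at_left 1)"
proof (rule tendsto_sandwich[of "\<lambda>x. x" _ _ "\<lambda>x. x + poly P x"])
  have ev: "eventually (\<lambda>x. x \<in> {0<..<1}) (at_left (1::real))"
    by (rule eventually_at_left_real) simp
  show "eventually (\<lambda>x. x \<le> f x) (at_left 1)"
    using ev by (rule eventually_mono) (use h in blast)
  show "eventually (\<lambda>x. f x \<le> x + poly P x) (at_left 1)"
    using ev by (rule eventually_mono) (use h in blast)
  show "((\<lambda>x. x) \<longlongrightarrow> 1) (at_left (1::real))" by (rule tendsto_ident_at)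
  have "((\<lambda>x. x + poly P x) \<longlongrightarrow> 1 + poly P 1) (at_left 1)"
    by (intro tendsto_add tendsto_ident_at tendsto_poly)
  then show "((\<lambda>x. x + poly P x) \<longlongrightarrow> 1) (at_left 1)" using p by simp
qed

lemma sand0:
  fixes P :: "real poly"
  assumes h: "\<And>x. x \<in> {0<..<1} \<Longrightarrow> x \<le> f x \<and> f x \<le> x + poly P x" and p: "poly P 0 = 0"
  shows "(f \<longlongrightarrow> 0) (at_right 0)"
proof (rule tendsto_sandwich[of "\<lambda>x. x" _ _ "\<lambda>x. x + poly P x"])
  have ev: "eventually (\<lambda>x. x \<in> {0<..<1}) (at_right (0::real))"
    by (rule eventually_at_right_real) simp
  show "eventually (\<lambda>x. x \<le> f x) (at_right 0)"
    using ev by (rule eventually_mono) (use h in blast)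
  show "eventually (\<lambda>x. f x \<le> x + poly P x) (at_right 0)"
    using ev by (rule eventually_mono) (use h in blast)
  show "((\<lambda>x. x) \<longlongrightarrow> 0) (at_right (0::real))" by (rule tendsto_ident_at)
  have "((\<lambda>x. x + poly P x) \<longlongrightarrow> 0 + poly P 0) (at_right 0)"
    by (intro tendsto_add tendsto_ident_at tendsto_poly)
  then show "((\<lambda>x. x + poly P x) \<longlongrightarrow> 0) (at_right 0)" using p by simp
qed

theorem lemma8p3:
  fixes P :: "real poly"
  assumes "poly P 0 = 0" and "poly P 1 = 0"
    and "\<forall>x\<in>{0<..<1}. 0 < poly P x \<and> poly P x < min x (1 - x)"
    and "(SUP x\<in>{0<..<1::real}. ereal \<bar>poly (pderiv P) x\<bar>) < 1"
  shows "\<forall>t\<in>{0..1::real}. cfun P t \<in> classD"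
proof
  fix t :: real assume t: "t \<in> {0..1}"
  define U :: "real set" where "U = {0<..<1}"
  have oU: "open U" unfolding U_def by simp
  have hU: "x \<in> U \<Longrightarrow> 0 < poly P x \<and> poly P x < min x (1 - x)" for x
    using assms(3) unfolding U_def by auto
  define D where "D = [:t:] + smult (1-t) P"
  define A where "A = [:0,1:] * D + smult t P"
  have pD: "poly D x = t + (1-t) * poly P x" for x unfolding D_def by simp
  have Dpos: "x \<in> U \<Longrightarrow> poly D x > 0" for x
  proof -
    assume x: "x \<in> U"
    show ?thesis
    proof (cases "t = 0")
      case True then show ?thesis using hU[OF x] pD by simp
    next
      case False then have "t > 0" using t by simp
      moreover have "(1-t) * poly P x \<ge> 0" using t hU[OF x] by simp
      ultimately show ?thesis using pD by simp
    qed
  qed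
  have cf: "x \<in> U \<Longrightarrow> cfun P t x = x + poly P x * t / poly D x" for x
    using t unfolding cfun_def phi_def pD by (simp add: algebra_simps)
  have cfA: "\<forall>x\<in>U. cfun P t x = poly A x / poly D x ^ 1"
  proof
    fix x assume x: "x \<in> U"
    have "poly D x \<noteq> 0" using Dpos[OF x] by simp
    then show "cfun P t x = poly A x / poly D x ^ 1"
      unfolding cf[OF x] A_def by (simp add: field_simps)
  qed
  have smooth: "smooth_on {0<..<1} (cfun P t)"
    using smooth_rep[OF oU _ cfA] Dpos unfolding U_def by force
  have lo: "x \<in> U \<Longrightarrow> x \<le> cfun P t x" for x
    using cf[of x] Dpos[of x] hU[of x] t by simp
  have hi: "x \<in> U \<Longrightarrow> cfun P t x \<le> x + poly P x" for x
  proof -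
    assume x: "x \<in> U"
    have d: "poly D x > 0" using Dpos[OF x] .
    have "poly P x * t \<le> poly P x * poly D x"
      using hU[OF x] t pD[of x] by (intro mult_left_mono) auto
    then have "poly P x * t / poly D x \<le> poly P x"
      using d by (simp add: divide_le_eq)
    then show ?thesis using cf[OF x] by simp
  qed
  have range: "\<forall>x\<in>{0<..<1}. cfun P t x \<in> {0<..<1}"
  proof
    fix x :: real assume x: "x \<in> {0<..<1}"
    then have xU: "x \<in> U" unfolding U_def .
    show "cfun P t x \<in> {0<..<1}"
      using lo[OF xU] hi[OF xU] hU[OF xU] x by auto
  qed
  have contP: "isCont (\<lambda>x. x + poly P x) a" for a by simp
  have lim1: "(cfun P t \<longlongrightarrow> 1) (at_left 1)"
    by (rule sand1[OF _ assms(2)]) (use lo hi in \<open>auto simp: U_def\<close>)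
  have lim0: "(cfun P t \<longlongrightarrow> 0) (at_right 0)"
    by (rule sand0[OF _ assms(1)]) (use lo hi in \<open>auto simp: U_def\<close>)
  have inA: "cfun P t \<in> classA"
    unfolding classA_def using smooth range lim1 lim0 by blast
  define S where "S = (SUP x\<in>{0<..<1::real}. ereal \<bar>poly (pderiv P) x\<bar>)"
  have Sub: "x \<in> U \<Longrightarrow> ereal \<bar>poly (pderiv P) x\<bar> \<le> S" for x
    unfolding S_def U_def by (rule SUP_upper) simp
  have "(1/2::real) \<in> U" unfolding U_def by simp
  from Sub[OF this] have "S \<noteq> -\<infinity>" by auto
  moreover have "S < 1" using assms(4) unfolding S_def .
  ultimately obtain s where S: "S = ereal s" and s1: "s < 1"
    by (cases S) auto
  have sb: "x \<in> U \<Longrightarrow> \<bar>poly (pderiv P) x\<bar> \<le> s" for x using Sub[of x] S by simp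
  have dlow: "deriv (cfun P t) x \<ge> 1 - s" if x: "x \<in> U" for x
  proof -
    define p where "p = poly P x"
    define p' where "p' = poly (pderiv P) x"
    define d where "d = poly D x"
    have d0: "d > 0" using Dpos[OF x] unfolding d_def .
    have g: "((\<lambda>y. y + poly P y * t / (t + (1-t) * poly P y)) has_real_derivative
          1 + (p' * t * (t + (1-t) * p) - ((1-t) * p') * (p * t)) / (t + (1-t) * p) ^ Suc (Suc 0)) (at x)"
    proof -
      have a: "((\<lambda>y. poly P y * t) has_real_derivative poly (pderiv P) x * t) (at x)"
        by (auto intro!: derivative_eq_intros)
      have b: "((\<lambda>y. t + (1 - t) * poly P y) has_real_derivative (1 - t) * poly (pderiv P) x) (at x)"
        by (auto intro!: derivative_eq_intros)
      have "t + (1-t) * poly P x \<noteq> 0" using d0 pD unfolding d_def by simp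
      from DERIV_add[OF DERIV_ident DERIV_quotient[OF a b this]] show ?thesis by (simp add: p_def p'_def)
    qed
    have "(cfun P t has_real_derivative
          1 + (p' * t * (t + (1-t) * p) - ((1-t) * p') * (p * t)) / (t + (1-t) * p) ^ Suc (Suc 0)) (at x)"
      by (rule has_field_derivative_transform_within_open[OF g oU x])
        (simp add: cf pD)
    then have "deriv (cfun P t) x = 1 + (p' * t * (t + (1-t) * p) - ((1-t) * p') * (p * t)) / (t + (1-t) * p) ^ Suc (Suc 0)"
      by (rule DERIV_imp_deriv)
    also have "\<dots> = 1 + (t/d)^2 * p'"
      using d0 unfolding d_def pD p_def[symmetric] by (simp add: field_simps power2_eq_square)
    finally have e: "deriv (cfun P t) x = 1 + (t/d)^2 * p'" .
    have q0: "0 \<le> t/d" using t d0 by simp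
    have q1: "t/d \<le> 1" using t d0 hU[OF x] unfolding d_def pD by (simp add: divide_le_eq)
    have q2: "(t/d)^2 \<le> 1" using q0 q1 by (simp add: power_le_one)
    have "\<bar>(t/d)^2 * p'\<bar> \<le> \<bar>p'\<bar>"
      using q2 by (simp add: abs_mult mult_left_le_one_le)
    then have "(t/d)^2 * p' \<ge> - s" using sb[OF x] unfolding p'_def by linarith
    then show ?thesis using e by simp
  qed
  have inf: "(INF x\<in>{0<..<1}. ereal (deriv (cfun P t) x)) \<ge> ereal (1 - s)"
    by (rule INF_greatest) (use dlow in \<open>auto simp: U_def\<close>)
  then have inf0: "(INF x\<in>{0<..<1}. ereal (deriv (cfun P t) x)) > 0"
    using s1 by (meson ereal_less(2) less_le_trans diff_gt_0_iff_gt)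
  have "(INF x\<in>{0<..<1::real}. ereal (deriv (cfun P t) x)) \<le> (SUP x\<in>{0<..<1}. ereal (deriv (cfun P t) x))"
    by (rule INF_le_SUP) simp
  then have sup0: "(SUP x\<in>{0<..<1}. ereal (deriv (cfun P t) x)) > 0" using inf0 by simp
  show "cfun P t \<in> classD" unfolding classD_def using inA inf0 sup0 by blast
qed

end
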